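(* Let $\Gamma=\langle V,(w_u)_{u\in V},\alpha,\beta\rangle$ be a celebrity game with $\beta>1$, $n=|V|$, $W=\sum_{u\in V}w_u$ and $w_{\max}=\max_u w_u$. The edgeless graph $I_n$ on $V$ is the unique Nash equilibrium graph of $\Gamma$ if and only if $\alpha\ge w_{\max}$ and there is more than one vertex $u\in V$ such that $\alpha>W-w_u$.
   Context: A celebrity game $\Gamma=\langle V,(w_u)_{u\in V},\alpha,\beta\rangle$ consists of a set of players $V=\{1,\dots,n\}$, celebrity weights $w_u>0$, a link cost $\alpha>0$ and a critical distance $\beta$ with $1\le\beta\le n-1$. A strategy of player $u$ is a set $S_u\subseteq V\setminus\{u\}$; a strategy profile is $S=(S_1,\dots,S_n)$; its outcome graph $G[S]$ is the undirected graph on $V$ with edge set $\{\{u,v\}: u\in S_v\text{ or }v\in S_u\}$. With $d_G$ the graph distance (infinite between different connected components), the cost of player $u$ is $c_u(S)=\alpha|S_u|+\sum_{v:\,d_{G[S]}(u,v)>\beta}w_v$. $S$ is a Nash equilibrium if no player can strictly decrease its cost by changing only its own strategy; a graph $G$ is a Nash equilibrium graph of $\Gamma$ if $G=G[S]$ for some Nash equilibrium $S$. *)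

theory Defs
  imports Main "HOL-Library.Extended_Nat"
begin

text \<open>Players are V = {1..n}; a strategy profile is a function S with S u a subset of V - {u}.
Graphs on V are represented by their edge sets (sets of two-element sets).\<close>

definition players :: "nat \<Rightarrow> nat set" where
  "players n = {1..n}"

definition is_profile :: "nat \<Rightarrow> (nat \<Rightarrow> nat set) \<Rightarrow> bool" where
  "is_profile n S \<longleftrightarrow> (\<forall>u\<in>players n. S u \<subseteq> players n - {u})"

definition outcome_graph :: "nat \<Rightarrow> (nat \<Rightarrow> nat set) \<Rightarrow> nat set set" where
  "outcome_graph n S = {{u, v} | u v. u \<in> players n \<and> v \<in> S u}"

definition walk :: "nat set set \<Rightarrow> nat list \<Rightarrow> bool" where
  "walk E xs \<longleftrightarrow> xs \<noteq> [] \<and> (\<forall>i < length xs - 1. {xs ! i, xs ! Suc i} \<in> E)"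

text \<open>Graph distance (infinite if no walk exists).\<close>
definition gdist :: "nat set set \<Rightarrow> nat \<Rightarrow> nat \<Rightarrow> enat" where
  "gdist E u v = (INF xs \<in> {xs. walk E xs \<and> hd xs = u \<and> last xs = v}. enat (length xs - 1))"

definition cost :: "nat \<Rightarrow> (nat \<Rightarrow> real) \<Rightarrow> real \<Rightarrow> nat \<Rightarrow> (nat \<Rightarrow> nat set) \<Rightarrow> nat \<Rightarrow> real" where
  "cost n w \<alpha> \<beta> S u = \<alpha> * real (card (S u))
     + (\<Sum>v \<in> {v \<in> players n. gdist (outcome_graph n S) u v > enat \<beta>}. w v)"

definition nash_eq :: "nat \<Rightarrow> (nat \<Rightarrow> real) \<Rightarrow> real \<Rightarrow> nat \<Rightarrow> (nat \<Rightarrow> nat set) \<Rightarrow> bool" where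
  "nash_eq n w \<alpha> \<beta> S \<longleftrightarrow> is_profile n S \<and>
     (\<forall>u \<in> players n. \<forall>T. T \<subseteq> players n - {u} \<longrightarrow>
        cost n w \<alpha> \<beta> S u \<le> cost n w \<alpha> \<beta> (S(u := T)) u)"

definition nash_eq_graph :: "nat \<Rightarrow> (nat \<Rightarrow> real) \<Rightarrow> real \<Rightarrow> nat \<Rightarrow> nat set set \<Rightarrow> bool" where
  "nash_eq_graph n w \<alpha> \<beta> E \<longleftrightarrow> (\<exists>S. nash_eq n w \<alpha> \<beta> S \<and> outcome_graph n S = E)"

end

theory Submission imports Defs begin

lemma walk_Cons: "walk E (z # ys) \<longleftrightarrow> (ys = [] \<or> (walk E ys \<and> {z, hd ys} \<in> E))"
  unfolding walk_def
  apply (cases ys)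
   apply simp
  apply (auto simp: less_Suc_eq_0_disj nth_Cons split: nat.splits)
  done

lemma walk_last: "walk E xs \<Longrightarrow> last xs = hd xs \<or> last xs \<in> \<Union>E"
proof (induction xs)
  case Nil then show ?case by (simp add: walk_def)
next
  case (Cons z ys)
  show ?case
  proof (cases "ys = []")
    case True then show ?thesis by simp
  next
    case False
    with Cons.prems have w: "walk E ys" "{z, hd ys} \<in> E" by (auto simp: walk_Cons)
    with Cons.IH False show ?thesis by auto
  qed
qed

lemma gdist_le: "walk E xs \<Longrightarrow> hd xs = u \<Longrightarrow> last xs = v \<Longrightarrow> gdist E u v \<le> enat (length xs - 1)"
  unfolding gdist_def by (rule INF_lower) auto

lemma gdist_top: "(\<And>xs. walk E xs \<Longrightarrow> hd xs = u \<Longrightarrow> last xs = v \<Longrightarrow> False) \<Longrightarrow> gdist E u v = \<infinity>"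
proof -
  assume h: "\<And>xs. walk E xs \<Longrightarrow> hd xs = u \<Longrightarrow> last xs = v \<Longrightarrow> False"
  have "{xs. walk E xs \<and> hd xs = u \<and> last xs = v} = {}" using h by blast
  then show ?thesis unfolding gdist_def by (metis INF_empty top_enat_def image_empty)
qed

lemma far_lower: "v \<noteq> u \<Longrightarrow> v \<notin> \<Union>E \<Longrightarrow> enat b < gdist E u v"
  by (metis gdist_top walk_last enat_ord_simps(4) infinity_ne_i0 enat.distinct(1))

lemma near_self: "\<not> enat b < gdist E u u"
proof -
  have "walk E [u]" by (simp add: walk_def)
  then have "gdist E u u \<le> enat 0" using gdist_le[of E "[u]"] by simp
  then show ?thesis by (simp add: zero_enat_def[symmetric])
qed

lemma single_of: "finite A \<Longrightarrow> card A \<le> 1 \<Longrightarrow> b \<in> A \<Longrightarrow> A = {b}"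
  by (metis card_le_Suc0_iff_eq One_nat_def singletonI subsetI subset_antisym insert_subset empty_subsetI)

lemma card_gt1: "finite A \<Longrightarrow> card A > 1 \<Longrightarrow> \<exists>a\<in>A. \<exists>b\<in>A. a \<noteq> b"
  by (metis card_le_Suc0_iff_eq not_le One_nat_def)

lemma fin_P: "finite (players n)" by (simp add: players_def)

lemma outcome_mem: "e \<in> outcome_graph n S \<longleftrightarrow> (\<exists>a b. e = {a,b} \<and> a \<in> players n \<and> b \<in> S a)"
  by (auto simp: outcome_graph_def)

lemma cost_ge:
  assumes "\<forall>v\<in>players n. w v > 0"
    and "A \<subseteq> {v \<in> players n. gdist (outcome_graph n S) u v > enat \<beta>}"
  shows "cost n w \<alpha> \<beta> S u \<ge> \<alpha> * real (card (S u)) + sum w A"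
proof -
  have "sum w A \<le> sum w {v \<in> players n. gdist (outcome_graph n S) u v > enat \<beta>}"
    by (rule sum_mono2) (use assms fin_P in \<open>auto intro: less_imp_le\<close>)
  then show ?thesis unfolding cost_def by simp
qed

lemma cost_le:
  assumes "\<forall>v\<in>players n. w v > 0" "u \<in> players n"
  shows "cost n w \<alpha> \<beta> (S(u:={})) u \<le> sum w (players n) - w u"
proof -
  have "{v \<in> players n. gdist (outcome_graph n (S(u:={}))) u v > enat \<beta>} \<subseteq> players n - {u}"
    using near_self by auto
  then have "sum w {v \<in> players n. gdist (outcome_graph n (S(u:={}))) u v > enat \<beta>} \<le> sum w (players n - {u})"
    by (intro sum_mono2) (use assms fin_P in \<open>auto intro: less_imp_le\<close>)
  also have "\<dots> = sum w (players n) - w u" using assms fin_P by (simp add: sum_diff1)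
  finally show ?thesis unfolding cost_def by simp
qed

lemma chain:
  assumes prof: "is_profile n S"
    and c1: "\<forall>v\<in>players n. card (S v) \<le> 1"
    and g: "g = (\<lambda>v. if S v = {} then v else (SOME b. b \<in> S v))"
  shows "walk (outcome_graph n S) xs \<Longrightarrow> S (last xs) = {} \<Longrightarrow> \<exists>k. (g ^^ k) (hd xs) = last xs"
proof (induction xs)
  case Nil then show ?case by (simp add: walk_def)
next
  case (Cons z ys)
  show ?case
  proof (cases "ys = []")
    case True then show ?thesis by (intro exI[of _ 0]) simp
  next
    case False
    with Cons.prems have w: "walk (outcome_graph n S) ys" "{z, hd ys} \<in> outcome_graph n S"
      by (auto simp: walk_Cons)
    from Cons.IH w(1) Cons.prems(2) False obtain k where k: "(g ^^ k) (hd ys) = last ys" by auto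
    from w(2) obtain a b where ab: "{z, hd ys} = {a,b}" "a \<in> players n" "b \<in> S a"
      by (auto simp: outcome_mem)
    have fin: "finite (S a)" using prof ab(2) fin_P unfolding is_profile_def by (meson finite_Diff finite_subset)
    have Sa: "S a = {b}" using single_of[OF fin] c1 ab(2,3) by auto
    have ga: "g a = b" using Sa g by simp
    from ab(1) have "(a = z \<and> b = hd ys) \<or> (a = hd ys \<and> b = z)" by (auto simp: doubleton_eq_iff)
    then show ?thesis
    proof
      assume h: "a = z \<and> b = hd ys"
      have "(g ^^ Suc k) z = (g ^^ k) (g z)" by (simp add: funpow_Suc_right del: funpow.simps)
      then show ?thesis using h ga k False by (intro exI[of _ "Suc k"]) simp
    next
      assume h: "a = hd ys \<and> b = z"
      show ?thesis
      proof (cases k)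
        case 0
        then have "hd ys = last ys" using k by simp
        then show ?thesis using Cons.prems(2) False h ab(3) by simp
      next
        case (Suc k')
        have "(g ^^ Suc k') (hd ys) = (g ^^ k') (g (hd ys))" by (simp add: funpow_Suc_right del: funpow.simps)
        then show ?thesis using h ga k False Suc by (intro exI[of _ k']) simp
      qed
    qed
  qed
qed

lemma far_lower2: "v \<noteq> u \<Longrightarrow> u \<notin> \<Union>E \<Longrightarrow> enat b < gdist E u v"
proof -
  assume a: "v \<noteq> u" "u \<notin> \<Union>E"
  have "gdist E u v = \<infinity>"
  proof (rule gdist_top)
    fix xs assume h: "walk E xs" "hd xs = u" "last xs = v"
    then obtain z ys where xs: "xs = z # ys" by (cases xs) (auto simp: walk_def)
    show False
    proof (cases "ys = []")
      case True then show False using h a xs by simp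
    next
      case False then have "{z, hd ys} \<in> E" using h xs by (simp add: walk_Cons)
      then show False using a h xs by auto
    qed
  qed
  then show ?thesis by simp
qed

lemma only_empty:
  assumes w_pos: "\<forall>u \<in> players n. w u > 0" and ap: "\<alpha> > 0"
    and ne: "nash_eq n w \<alpha> \<beta> S"
    and u12: "u1 \<in> players n" "u2 \<in> players n" "u1 \<noteq> u2"
    and a1: "\<alpha> > sum w (players n) - w u1" and a2: "\<alpha> > sum w (players n) - w u2"
  shows "outcome_graph n S = {}"
proof (rule ccontr)
  let ?P = "players n" and ?W = "sum w (players n)"
  assume ne_E: "outcome_graph n S \<noteq> {}"
  have prof: "is_profile n S" using ne by (simp add: nash_eq_def)
  have finS: "finite (S v)" if "v \<in> ?P" for v
    using prof that fin_P unfolding is_profile_def by (meson finite_Diff finite_subset)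
  have upper: "cost n w \<alpha> \<beta> S v \<le> ?W - w v" if "v \<in> ?P" for v
  proof -
    have "cost n w \<alpha> \<beta> S v \<le> cost n w \<alpha> \<beta> (S(v:={})) v" using ne that by (simp add: nash_eq_def)
    also have "\<dots> \<le> ?W - w v" by (rule cost_le) (use w_pos that in auto)
    finally show ?thesis .
  qed
  have c_le: "\<alpha> * real (card (S v)) \<le> ?W - w v" if "v \<in> ?P" for v
    using cost_ge[OF w_pos, where A="{}" and S=S and u=v and \<beta>=\<beta> and \<alpha>=\<alpha>] upper[OF that] by simp
  have S1: "S u1 = {}"
  proof -
    have "\<alpha> * real (card (S u1)) < \<alpha>" using c_le[OF u12(1)] a1 by simp
    then have "card (S u1) = 0" using ap by (simp add: mult_less_cancel_left2)
    then show ?thesis using finS u12(1) by simp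
  qed
  have S2: "S u2 = {}"
  proof -
    have "\<alpha> * real (card (S u2)) < \<alpha>" using c_le[OF u12(2)] a2 by simp
    then have "card (S u2) = 0" using ap by (simp add: mult_less_cancel_left2)
    then show ?thesis using finS u12(2) by simp
  qed
  have c1: "\<forall>v\<in>?P. card (S v) \<le> 1"
  proof
    fix v assume v: "v \<in> ?P"
    show "card (S v) \<le> 1"
    proof (cases "v = u1 \<or> v = u2")
      case True then show ?thesis using S1 S2 by auto
    next
      case False
      show ?thesis
      proof (rule ccontr)
        assume "\<not> card (S v) \<le> 1"
        then have "real (card (S v)) \<ge> 2" by simp
        then have "\<alpha> * 2 \<le> \<alpha> * real (card (S v))" using ap by (intro mult_left_mono) auto
        then have "2 * \<alpha> \<le> ?W - w v" using c_le[OF v] by linarith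
        moreover have "sum w {u1, u2, v} \<le> ?W"
          by (rule sum_mono2) (use fin_P u12 v w_pos in \<open>auto intro: less_imp_le\<close>)
        moreover have "sum w {u1, u2, v} = w u1 + w u2 + w v" using False u12 by simp
        ultimately show False using a1 a2 w_pos v by force
      qed
    qed
  qed
  from ne_E obtain e where "e \<in> outcome_graph n S" by auto
  then obtain a b where ab: "a \<in> ?P" "b \<in> S a" by (auto simp: outcome_mem)
  have cardSa: "card (S a) \<ge> 1" using ab finS by (metis card_0_eq empty_iff less_one not_le)
  have reach: "\<exists>xs. walk (outcome_graph n S) xs \<and> hd xs = a \<and> last xs = t"
    if t: "t \<in> ?P" "\<alpha> > ?W - w t" for t
  proof (rule ccontr)
    assume nr: "\<nexists>xs. walk (outcome_graph n S) xs \<and> hd xs = a \<and> last xs = t"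
    then have "gdist (outcome_graph n S) a t = \<infinity>" by (intro gdist_top) auto
    then have "{t} \<subseteq> {v \<in> ?P. gdist (outcome_graph n S) a v > enat \<beta>}" using t by simp
    from cost_ge[OF w_pos this] have "cost n w \<alpha> \<beta> S a \<ge> \<alpha> * real (card (S a)) + w t" by simp
    moreover have "\<alpha> * real (card (S a)) \<ge> \<alpha>" using cardSa ap by simp
    ultimately show False using upper[OF ab(1)] t w_pos ab(1) by force
  qed
  define g where "g = (\<lambda>v. if S v = {} then v else (SOME b. b \<in> S v))"
  obtain xs1 where x1: "walk (outcome_graph n S) xs1" "hd xs1 = a" "last xs1 = u1"
    using reach u12(1) a1 by blast
  obtain xs2 where x2: "walk (outcome_graph n S) xs2" "hd xs2 = a" "last xs2 = u2"
    using reach u12(2) a2 by blast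
  obtain k where k: "(g ^^ k) a = u1" using chain[OF prof c1 g_def x1(1)] x1 S1 by auto
  obtain m where m: "(g ^^ m) a = u2" using chain[OF prof c1 g_def x2(1)] x2 S2 by auto
  have fix1: "(g ^^ j) u1 = u1" for j by (induction j) (simp_all add: g_def S1)
  have fix2: "(g ^^ j) u2 = u2" for j by (induction j) (simp_all add: g_def S2)
  show False
  proof (cases "k \<le> m")
    case True
    then have "(g ^^ m) a = (g ^^ (m - k)) ((g ^^ k) a)"
      by (metis funpow_add le_add_diff_inverse2 comp_apply)
    then show False using k m fix1 u12 by simp
  next
    case False
    then have "(g ^^ k) a = (g ^^ (k - m)) ((g ^^ m) a)"
      by (metis funpow_add le_add_diff_inverse2 comp_apply nat_le_linear)
    then show False using k m fix2 u12 by simp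
  qed
qed

lemma empty_ne:
  assumes w_pos: "\<forall>u \<in> players n. w u > 0" and wa: "\<forall>v\<in>players n. w v \<le> \<alpha>"
  shows "nash_eq n w \<alpha> \<beta> (\<lambda>_. {})"
  unfolding nash_eq_def
proof (intro conjI ballI allI impI)
  show "is_profile n (\<lambda>_. {})" by (simp add: is_profile_def)
  fix u T assume u: "u \<in> players n" and T: "T \<subseteq> players n - {u}"
  let ?S = "(\<lambda>_. {}) :: nat \<Rightarrow> nat set"
  have E0: "outcome_graph n ?S = {}" by (simp add: outcome_graph_def)
  have far0: "{v \<in> players n. gdist (outcome_graph n ?S) u v > enat \<beta>} = players n - {u}"
    using near_self far_lower[of _ u "{}"] E0 by auto
  have c0: "cost n w \<alpha> \<beta> ?S u = sum w (players n) - w u"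
    unfolding cost_def far0 using u fin_P by (simp add: sum_diff1)
  have U: "\<Union>(outcome_graph n (?S(u:=T))) \<subseteq> {u} \<union> T"
    by (auto simp: outcome_graph_def split: if_splits)
  have sub: "players n - {u} - T \<subseteq> {v \<in> players n. gdist (outcome_graph n (?S(u:=T))) u v > enat \<beta>}"
    using far_lower U by blast
  have finT: "finite T" using T fin_P by (meson finite_Diff finite_subset)
  have "cost n w \<alpha> \<beta> (?S(u:=T)) u \<ge> \<alpha> * real (card T) + sum w (players n - {u} - T)"
    using cost_ge[OF w_pos sub] by simp
  moreover have "sum w (players n - {u} - T) = sum w (players n - {u}) - sum w T"
    using T fin_P by (intro sum_diff) auto
  moreover have "sum w (players n - {u}) = sum w (players n) - w u" using u fin_P by (simp add: sum_diff1)
  moreover have "sum w T \<le> real (card T) * \<alpha>" using T wa by (intro sum_bounded_above) auto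
  ultimately show "cost n w \<alpha> \<beta> ?S u \<le> cost n w \<alpha> \<beta> (?S(u:=T)) u" using c0 by (simp add: mult.commute)
qed

lemma empty_forces:
  assumes w_pos: "\<forall>u \<in> players n. w u > 0" and b1: "1 \<le> \<beta>"
    and ne: "nash_eq n w \<alpha> \<beta> S" and E0: "outcome_graph n S = {}"
    and uv: "u \<in> players n" "v \<in> players n" "u \<noteq> v"
  shows "w v \<le> \<alpha>"
proof -
  have far0: "{x \<in> players n. gdist (outcome_graph n S) u x > enat \<beta>} = players n - {u}"
    using near_self far_lower[of _ u "{}"] E0 by auto
  have Su: "S u = {}" using E0 uv(1) unfolding outcome_graph_def by blast
  have c0: "cost n w \<alpha> \<beta> S u \<ge> sum w (players n) - w u"
    using Su cost_ge[OF w_pos, where A="players n - {u}" and S=S and u=u and \<beta>=\<beta> and \<alpha>=\<alpha>] far0 uv fin_P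
    by (simp add: sum_diff1)
  let ?S' = "S(u:={v})"
  have ed: "{u,v} \<in> outcome_graph n ?S'" using uv by (auto simp: outcome_mem)
  have wk: "walk (outcome_graph n ?S') [u,v]" using ed by (simp add: walk_def)
  have "gdist (outcome_graph n ?S') u v \<le> enat 1" using gdist_le[OF wk] by simp
  then have nv: "\<not> gdist (outcome_graph n ?S') u v > enat \<beta>" using b1
    by (metis enat_ord_simps(1) leD order_le_less_trans)
  have farsub: "{x \<in> players n. gdist (outcome_graph n ?S') u x > enat \<beta>} \<subseteq> players n - {u} - {v}"
    using near_self nv by auto
  have "sum w {x \<in> players n. gdist (outcome_graph n ?S') u x > enat \<beta>} \<le> sum w (players n - {u} - {v})"
    by (intro sum_mono2) (use farsub fin_P w_pos in \<open>auto intro: less_imp_le\<close>)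
  also have "\<dots> = sum w (players n) - w u - w v" using uv fin_P by (simp add: sum_diff1)
  finally have "cost n w \<alpha> \<beta> ?S' u \<le> \<alpha> + (sum w (players n) - w u - w v)"
    unfolding cost_def by simp
  moreover have "cost n w \<alpha> \<beta> S u \<le> cost n w \<alpha> \<beta> ?S' u"
    using ne uv unfolding nash_eq_def by auto
  ultimately show ?thesis using c0 by linarith
qed

lemma star_ne:
  assumes w_pos: "\<forall>u \<in> players n. w u > 0" and ap: "\<alpha> > 0" and b2: "2 \<le> \<beta>"
    and c: "c \<in> players n" and x: "x \<in> players n" "x \<noteq> c"
    and ac: "\<forall>u\<in>players n - {c}. \<alpha> \<le> sum w (players n) - w u"
  shows "\<exists>E. E \<noteq> {} \<and> nash_eq_graph n w \<alpha> \<beta> E"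
proof -
  define S where "S = (\<lambda>v. if v \<in> players n \<and> v \<noteq> c then {c} else ({}::nat set))"
  let ?E = "outcome_graph n S"
  have edge: "{y, c} \<in> ?E" if "y \<in> players n" "y \<noteq> c" for y
    using that c by (auto simp: outcome_mem S_def)
  have d1: "\<not> gdist ?E a b > enat \<beta>" if "{a,b} \<in> ?E" for a b
  proof -
    have wk: "walk ?E [a,b]" using that by (simp add: walk_def)
    have "gdist ?E a b \<le> enat 1" using gdist_le[OF wk] by simp
    then show ?thesis using b2 by (metis enat_ord_simps(1) leD order_le_less_trans one_le_numeral le_trans)
  qed
  have d2: "\<not> gdist ?E a b > enat \<beta>" if "{a,c} \<in> ?E" "{c,b} \<in> ?E" for a b
  proof -
    have wk: "walk ?E [a,c,b]" using that by (simp add: walk_def less_Suc_eq nth_Cons split: nat.splits)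
    have "gdist ?E a b \<le> enat (length [a,c,b] - 1)" using gdist_le[OF wk] by simp
    then have "gdist ?E a b \<le> enat 2" by (simp add: numeral_2_eq_2)
    then show ?thesis using b2 by (metis enat_ord_simps(1) leD order_le_less_trans)
  qed
  have ne: "nash_eq n w \<alpha> \<beta> S"
    unfolding nash_eq_def
  proof (intro conjI ballI allI impI)
    show "is_profile n S" using c by (auto simp: is_profile_def S_def)
    fix u T assume u: "u \<in> players n" and T: "T \<subseteq> players n - {u}"
    have cge: "cost n w \<alpha> \<beta> S' u \<ge> \<alpha> * real (card (S' u))" for S'
      using cost_ge[OF w_pos, where A="{}" and S=S' and u=u and \<beta>=\<beta> and \<alpha>=\<alpha>] by simp
    show "cost n w \<alpha> \<beta> S u \<le> cost n w \<alpha> \<beta> (S(u:=T)) u"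
    proof (cases "u = c")
      case True
      have f0: "{v \<in> players n. gdist ?E u v > enat \<beta>} = {}"
        using True near_self d1 edge by (auto simp: insert_commute) (metis insert_commute)
      have "S u = {}" using True by (simp add: S_def)
      then have "cost n w \<alpha> \<beta> S u = 0" unfolding cost_def f0 by simp
      moreover have "cost n w \<alpha> \<beta> (S(u:=T)) u \<ge> 0" using cge[of "S(u:=T)"] ap
        by (smt (verit) of_nat_0_le_iff zero_le_mult_iff)
      ultimately show ?thesis by simp
    next
      case False
      have far: "{v \<in> players n. gdist ?E u v > enat \<beta>} = {}"
      proof -
        have "\<not> gdist ?E u v > enat \<beta>" if v: "v \<in> players n" for v
        proof -
          consider "v = u" | "v = c" | "v \<noteq> u \<and> v \<noteq> c" by blast
          then show ?thesis
          proof cases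
            case 1 then show ?thesis by (simp add: near_self)
          next
            case 2 then show ?thesis using d1 edge u False by blast
          next
            case 3 then show ?thesis using d2[of u v] edge[OF u False] edge[OF v] by (simp add: insert_commute)
          qed
        qed
        then show ?thesis by auto
      qed
      have "S u = {c}" using u False by (simp add: S_def)
      then have cS: "cost n w \<alpha> \<beta> S u = \<alpha>" unfolding cost_def far by simp
      show ?thesis
      proof (cases "T = {}")
        case True
        have U: "u \<notin> \<Union>(outcome_graph n (S(u:={})))"
          using False by (auto simp: outcome_graph_def S_def split: if_splits)
        have sub: "players n - {u} \<subseteq> {v \<in> players n. gdist (outcome_graph n (S(u:={}))) u v > enat \<beta>}"
          using far_lower2[OF _ U] by blast
        have "cost n w \<alpha> \<beta> (S(u:={})) u \<ge> sum w (players n - {u})"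
          using cost_ge[OF w_pos sub] by simp
        also have "sum w (players n - {u}) = sum w (players n) - w u" using u fin_P by (simp add: sum_diff1)
        finally have "sum w (players n) - w u \<le> cost n w \<alpha> \<beta> (S(u:=T)) u" using True by (simp only:)
        moreover have "\<alpha> \<le> sum w (players n) - w u" using ac u \<open>u \<noteq> c\<close> by auto
        ultimately show ?thesis using cS by linarith
      next
        case False
        have "finite T" using T fin_P by (meson finite_Diff finite_subset)
        then have "real (card T) \<ge> 1" using False by (simp add: Suc_leI card_gt_0_iff)
        then have "\<alpha> * real (card T) \<ge> \<alpha>" using ap by simp
        then show ?thesis using cS cge[of "S(u:=T)"] by simp
      qed
    qed
  qed
  have "?E \<noteq> {}" using edge[OF x] by auto
  then show ?thesis using ne unfolding nash_eq_graph_def by blast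
qed

theorem corollary1:
  fixes n \<beta> :: nat and w :: "nat \<Rightarrow> real" and \<alpha> :: real
  assumes w_pos: "\<forall>u \<in> players n. w u > 0"
    and \<alpha>_pos: "\<alpha> > 0"
    and \<beta>_ge: "1 \<le> \<beta>" and \<beta>_le: "\<beta> \<le> n - 1"
    and \<beta>_gt: "\<beta> > 1"
  shows "(\<forall>E. nash_eq_graph n w \<alpha> \<beta> E \<longleftrightarrow> E = {}) \<longleftrightarrow>
         (\<alpha> \<ge> Max (w ` players n) \<and>
          card {u \<in> players n. \<alpha> > (\<Sum>v \<in> players n. w v) - w u} > 1)"
proof -
  let ?P = "players n" and ?W = "\<Sum>v \<in> players n. w v"
  let ?A = "{u \<in> players n. \<alpha> > ?W - w u}"
  have n3: "n \<ge> 3" using \<beta>_le \<beta>_gt by linarith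
  have P1: "1 \<in> ?P" "2 \<in> ?P" using n3 by (auto simp: players_def)
  have Pne: "?P \<noteq> {}" using P1 by auto
  have maxiff: "(\<alpha> \<ge> Max (w ` ?P)) \<longleftrightarrow> (\<forall>v\<in>?P. w v \<le> \<alpha>)"
    using fin_P Pne by (simp add: Max_le_iff)
  have finA: "finite ?A" using fin_P by simp
  show ?thesis
  proof
    assume H: "\<forall>E. nash_eq_graph n w \<alpha> \<beta> E \<longleftrightarrow> E = {}"
    then have "nash_eq_graph n w \<alpha> \<beta> {}" by blast
    then obtain S where S: "nash_eq n w \<alpha> \<beta> S" "outcome_graph n S = {}"
      unfolding nash_eq_graph_def by blast
    have wa: "\<forall>v\<in>?P. w v \<le> \<alpha>"
    proof
      fix v assume v: "v \<in> ?P"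
      define u where "u = (if v = 1 then 2 else (1::nat))"
      have "u \<in> ?P" "u \<noteq> v" using P1 by (auto simp: u_def)
      then show "w v \<le> \<alpha>" using empty_forces[OF w_pos \<beta>_ge S] v by blast
    qed
    have "card ?A > 1"
    proof (rule ccontr)
      assume "\<not> card ?A > 1"
      then have cA: "card ?A \<le> 1" by simp
      obtain c where c: "c \<in> ?P" "\<forall>u\<in>?P - {c}. \<alpha> \<le> ?W - w u"
      proof (cases "?A = {}")
        case True then show ?thesis using that[of 1] P1 by force
      next
        case False
        then obtain c where "c \<in> ?A" by blast
        then have "?A = {c}" using single_of[OF finA cA] by blast
        then show ?thesis using that[of c] by force
      qed
      obtain x where x: "x \<in> ?P" "x \<noteq> c" using P1 by (cases "c = 1") auto
      have b2: "2 \<le> \<beta>" using \<beta>_gt by simp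
      from star_ne[OF w_pos \<alpha>_pos b2 c(1) x c(2)] obtain E where "E \<noteq> {}" "nash_eq_graph n w \<alpha> \<beta> E"
        by auto
      then show False using H by blast
    qed
    then show "\<alpha> \<ge> Max (w ` ?P) \<and> card ?A > 1" using wa maxiff by blast
  next
    assume R: "\<alpha> \<ge> Max (w ` ?P) \<and> card ?A > 1"
    then have wa: "\<forall>v\<in>?P. w v \<le> \<alpha>" using maxiff by blast
    from R card_gt1[OF finA] obtain u1 u2 where u: "u1 \<in> ?A" "u2 \<in> ?A" "u1 \<noteq> u2" by blast
    show "\<forall>E. nash_eq_graph n w \<alpha> \<beta> E \<longleftrightarrow> E = {}"
    proof (intro allI iffI)
      fix E assume "nash_eq_graph n w \<alpha> \<beta> E"
      then obtain S where "nash_eq n w \<alpha> \<beta> S" "outcome_graph n S = E" unfolding nash_eq_graph_def by auto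
      then show "E = {}" using only_empty[OF w_pos \<alpha>_pos, of \<beta> S u1 u2] u by auto
    next
      fix E :: "nat set set" assume "E = {}"
      moreover have "outcome_graph n (\<lambda>_. {}) = {}" by (simp add: outcome_graph_def)
      ultimately show "nash_eq_graph n w \<alpha> \<beta> E" using empty_ne[OF w_pos wa]
        unfolding nash_eq_graph_def by blast
    qed
  qed
qed

end
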